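(* Let $A_1,A_2\in\mathbb{R}^{2\times2}$ and suppose $A_1$ has two distinct eigenvalues. Then there exists $T\in GL(2,\mathbb{R})$ such that: (i) if $A_1$ has real eigenvalues and $\det[A_1,A_2]\ne0$, then $TA_1T^{-1}=\begin{pmatrix}\lambda_1&0\\0&\lambda_2\end{pmatrix}$ and $TA_2T^{-1}=\begin{pmatrix}s_{21}&t_2\\t_2&s_{22}\end{pmatrix}$ or $\begin{pmatrix}s_{21}&-t_2\\t_2&s_{22}\end{pmatrix}$ for some $\lambda_j,s_{2j},t_2\in\mathbb{R}$, $j=1,2$; (ii) if $A_1$ has non-real eigenvalues, then $TA_1T^{-1}=\begin{pmatrix}s_1&-t_1\\t_1&s_1\end{pmatrix}$ and $TA_2T^{-1}=\begin{pmatrix}s_{21}&-t_2\\t_2&s_{22}\end{pmatrix}$ for some $s_1,t_1,s_{21},s_{22},t_2\in\mathbb{R}$.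
   Context: $[A,B]=AB-BA$. *)

theory Defs
  imports "HOL-Analysis.Analysis"
begin

definition cmat :: "real^'n^'n \<Rightarrow> complex^'n^'n" where
  "cmat A = (\<chi> i j. complex_of_real (A $ i $ j))"

definition eigenvalues :: "real^'n^'n \<Rightarrow> complex set" where
  "eigenvalues A = {\<mu>. det (mat \<mu> - cmat A) = 0}"

definition commutator :: "real^'n^'n \<Rightarrow> real^'n^'n \<Rightarrow> real^'n^'n" where
  "commutator A B = A ** B - B ** A"

definition mat2 :: "real \<Rightarrow> real \<Rightarrow> real \<Rightarrow> real \<Rightarrow> real^2^2" where
  "mat2 a b c d = vector [vector [a, b], vector [c, d]]"

end

theory Submission
  imports Defs
begin

lemma mat2_comp[simp]: "mat2 a b c d $1$1 = a" "mat2 a b c d $1$2 = b" "mat2 a b c d $2$1 = c" "mat2 a b c d $2$2 = d"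
  by (simp_all add: mat2_def)

lemma mat2_eta: "(M::real^2^2) = mat2 (M$1$1) (M$1$2) (M$2$1) (M$2$2)"
  by (simp add: vec_eq_iff forall_2)

lemma mat2_eq_iff: "mat2 a b c d = mat2 a' b' c' d' \<longleftrightarrow> a=a' \<and> b=b' \<and> c=c' \<and> d=d'"
  by (metis mat2_comp)

lemma mat2_mult[simp]: "mat2 a b c d ** mat2 e f g h = mat2 (a*e+b*g) (a*f+b*h) (c*e+d*g) (c*f+d*h)"
  by (simp add: vec_eq_iff forall_2 matrix_matrix_mult_def sum_2)

lemma mat2_diff[simp]: "mat2 a b c d - mat2 e f g h = mat2 (a-e) (b-f) (c-g) (d-h)"
  by (simp add: vec_eq_iff forall_2)

lemma det_mat2[simp]: "det (mat2 a b c d) = a*d - b*c"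
  by (simp add: det_2)

lemma inv_conj:
  fixes T A B :: "real^2^2"
  assumes "invertible T" "T ** A = B ** T"
  shows "T ** A ** matrix_inv T = B"
proof -
  have "T ** matrix_inv T = mat 1"
    using assms(1) unfolding invertible_def matrix_inv_def by (rule someI2_ex) auto
  then show ?thesis using assms(2) by (metis matrix_mul_assoc matrix_mul_rid)
qed

lemma eig_mat2: "eigenvalues (mat2 a b c d) = {\<mu>. (\<mu> - of_real a)*(\<mu> - of_real d) - of_real b * of_real c = 0}"
  by (simp add: eigenvalues_def det_2 cmat_def mat_def)


lemma mm_sub_rdistrib: "((A::real^2^2) - B) ** C = A ** C - B ** C"
  by (simp add: vec_eq_iff forall_2 matrix_matrix_mult_def sum_2 algebra_simps)

lemma mm_sub_ldistrib: "(C::real^2^2) ** (A - B) = C ** A - C ** B"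
  by (simp add: vec_eq_iff forall_2 matrix_matrix_mult_def sum_2 algebra_simps)

lemma sim_trans: "T1 ** A = B ** T1 \<Longrightarrow> T2 ** B = C ** T2 \<Longrightarrow> (T2 ** T1) ** (A::real^2^2) = C ** (T2 ** T1)"
  by (metis matrix_mul_assoc)

lemma sim_comm:
  fixes T A A' B D :: "real^2^2"
  assumes "T ** A = D ** T" "T ** A' = B ** T"
  shows "T ** commutator A A' = commutator D B ** T"
proof -
  have "T ** (A ** A') = D ** B ** T" by (metis assms matrix_mul_assoc)
  moreover have "T ** (A' ** A) = B ** D ** T" by (metis assms matrix_mul_assoc)
  ultimately show ?thesis unfolding commutator_def by (simp add: mm_sub_ldistrib mm_sub_rdistrib)
qed

lemma sim_det:
  fixes T A B :: "real^2^2"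
  assumes "invertible T" "T ** A = B ** T"
  shows "det A = det B"
proof -
  have "det T \<noteq> 0" using assms(1) invertible_det_nz by blast
  moreover have "det T * det A = det B * det T" by (metis assms(2) det_mul)
  ultimately show ?thesis by simp
qed

lemma sim_inv:
  fixes T A :: "real^2^2"
  assumes "invertible T"
  shows "T ** A = (T ** A ** matrix_inv T) ** T"
proof -
  have "matrix_inv T ** T = mat 1"
    using assms(1) unfolding invertible_def matrix_inv_def by (rule someI2_ex) auto
  then show ?thesis by (metis matrix_mul_assoc matrix_mul_rid)
qed

lemma inv2: "det (M::real^2^2) \<noteq> 0 \<Longrightarrow> invertible M"
  using invertible_det_nz by blast

lemma eig_key: "4*((\<mu> - complex_of_real a)*(\<mu> - of_real d) - of_real b * of_real c)
   = (2*\<mu> - of_real a - of_real d)^2 - of_real ((a-d)^2 + 4*b*c)"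
  by (simp add: algebra_simps power2_eq_square)

lemma eig_iff: "\<mu> \<in> eigenvalues (mat2 a b c d) \<longleftrightarrow>
   (2*\<mu> - of_real a - of_real d)^2 = of_real ((a-d)^2 + 4*b*c)"
proof -
  have "\<mu> \<in> eigenvalues (mat2 a b c d) \<longleftrightarrow> (\<mu> - complex_of_real a)*(\<mu> - of_real d) - of_real b * of_real c = 0"
    by (simp add: eig_mat2)
  also have "\<dots> \<longleftrightarrow> 4*((\<mu> - complex_of_real a)*(\<mu> - of_real d) - of_real b * of_real c) = 0" by simp
  also have "\<dots> \<longleftrightarrow> (2*\<mu> - of_real a - of_real d)^2 - of_real ((a-d)^2 + 4*b*c) = 0"
    by (simp only: eig_key)
  finally show ?thesis by (simp only: right_minus_eq)
qed

lemma eig_zero: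
  assumes "(a-d)^2 + 4*b*c = 0"
  shows "eigenvalues (mat2 a b c d) = {of_real ((a+d)/2)}"
proof -
  have "\<mu> \<in> eigenvalues (mat2 a b c d) \<longleftrightarrow> \<mu> = of_real ((a+d)/2)" for \<mu>
  proof -
    have "\<mu> \<in> eigenvalues (mat2 a b c d) \<longleftrightarrow> (2*\<mu> - of_real a - of_real d)^2 = 0"
      using assms by (simp only: eig_iff of_real_0)
    also have "\<dots> \<longleftrightarrow> \<mu> = of_real ((a+d)/2)"
      by (auto simp: field_simps)
    finally show ?thesis .
  qed
  then show ?thesis by blast
qed

lemma eig_pos:
  assumes "(a-d)^2 + 4*b*c > 0"
  shows "eigenvalues (mat2 a b c d) \<subseteq> \<real>"
proof
  fix \<mu> assume "\<mu> \<in> eigenvalues (mat2 a b c d)"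
  define r where "r = sqrt ((a-d)^2 + 4*b*c)"
  have r2: "r^2 = (a-d)^2 + 4*b*c" using assms by (simp add: r_def)
  have h: "(2*\<mu> - of_real a - of_real d)^2 = of_real ((a-d)^2 + 4*b*c)"
    using \<open>\<mu> \<in> _\<close> by (simp only: eig_iff)
  have "of_real ((a-d)^2 + 4*b*c) = (of_real r :: complex)^2" using r2 by (metis of_real_power)
  with h have "(2*\<mu> - of_real a - of_real d)^2 = of_real r ^2" by simp
  then have "(2*\<mu> - of_real a - of_real d - of_real r) * (2*\<mu> - of_real a - of_real d + of_real r) = 0"
    by (simp add: algebra_simps power2_eq_square)
  then have "2*\<mu> - of_real a - of_real d - of_real r = 0 \<or> 2*\<mu> - of_real a - of_real d + of_real r = 0"
    by simp
  then have "2*\<mu> = of_real (a+d+r) \<or> 2*\<mu> = of_real (a+d-r)"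
    by (auto simp: algebra_simps)
  then have "\<mu> = of_real ((a+d+r)/2) \<or> \<mu> = of_real ((a+d-r)/2)"
    by (metis mult.commute nonzero_mult_div_cancel_right of_real_divide of_real_numeral zero_neq_numeral)
  then show "\<mu> \<in> \<real>" by (metis Reals_of_real)
qed

lemma eig_neg:
  assumes "(a-d)^2 + 4*b*c < 0"
  shows "of_real ((a+d)/2) + \<i> * of_real (sqrt (-((a-d)^2 + 4*b*c))/2) \<in> eigenvalues (mat2 a b c d)"
    and "of_real ((a+d)/2) + \<i> * of_real (sqrt (-((a-d)^2 + 4*b*c))/2) \<notin> \<real>"
proof -
  define t where "t = sqrt (-((a-d)^2 + 4*b*c))"
  have t2: "t^2 = -((a-d)^2 + 4*b*c)" using assms by (simp add: t_def)
  have tpos: "t > 0" using assms by (simp add: t_def)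
  let ?m = "of_real ((a+d)/2) + \<i> * of_real (t/2)"
  have e: "2*?m - of_real a - of_real d = \<i> * of_real t"
    by (simp add: complex_eq_iff field_simps)
  have "(2*?m - of_real a - of_real d)^2 = (\<i> * of_real t)^2" by (simp only: e)
  also have "\<dots> = - of_real (t^2)" by (simp add: power_mult_distrib)
  also have "\<dots> = of_real ((a-d)^2 + 4*b*c)" using t2 by simp
  finally show "?m \<in> eigenvalues (mat2 a b c d)" unfolding t_def by (simp only: eig_iff)
  have "Im ?m \<noteq> 0" using tpos by simp
  then show "?m \<notin> \<real>" unfolding t_def using complex_is_Real_iff by auto
qed



lemma diag_real:
  assumes "(a-d)^2 + 4*b*c > 0"
  shows "\<exists>T l1 l2. invertible T \<and> T ** mat2 a b c d = mat2 l1 0 0 l2 ** T"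
proof -
  define r where "r = sqrt ((a-d)^2 + 4*b*c)"
  have r2: "r^2 = (a-d)^2 + 4*b*c" using assms by (simp add: r_def)
  have rpos: "r > 0" using assms by (simp add: r_def)
  define l1 where "l1 = (a+d+r)/2"
  define l2 where "l2 = (a+d-r)/2"
  have "(l1-a)*(l1-d) = (r^2 - (a-d)^2)/4" unfolding l1_def by (simp add: field_simps power2_eq_square)
  then have k1: "(l1-a)*(l1-d) = b*c" using r2 by simp
  have "(l2-a)*(l2-d) = (r^2 - (a-d)^2)/4" unfolding l2_def by (simp add: field_simps power2_eq_square)
  then have k2: "(l2-a)*(l2-d) = b*c" using r2 by simp
  show ?thesis
  proof (cases "c = 0")
    case False
    let ?T = "mat2 c (l1-a) c (l2-a)"
    have "det ?T = c * (l2 - l1)" by (simp add: algebra_simps)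
    then have "det ?T \<noteq> 0" using False rpos by (simp add: l1_def l2_def)
    moreover have "?T ** mat2 a b c d = mat2 l1 0 0 l2 ** ?T"
      apply (simp add: mat2_eq_iff)
      using k1 k2 by (simp add: algebra_simps)
    ultimately show ?thesis using inv2 by blast
  next
    case c0: True
    show ?thesis
    proof (cases "b = 0")
      case False
      let ?T = "mat2 (l1-d) b (l2-d) b"
      have "det ?T = b * (l1 - l2)" by (simp add: algebra_simps)
      then have "det ?T \<noteq> 0" using False rpos by (simp add: l1_def l2_def)
      moreover have "?T ** mat2 a b c d = mat2 l1 0 0 l2 ** ?T"
        apply (simp add: mat2_eq_iff)
        using k1 k2 by (simp add: algebra_simps)
      ultimately show ?thesis using inv2 by blast
    next
      case True
      let ?T = "mat2 1 0 0 1"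
      have "det ?T \<noteq> 0" by simp
      moreover have "?T ** mat2 a b c d = mat2 a 0 0 d ** ?T"
        using True c0 by (simp add: mat2_eq_iff)
      ultimately show ?thesis using inv2 by blast
    qed
  qed
qed


lemma fix_i:
  assumes "q \<noteq> 0" "u \<noteq> 0"
  shows "\<exists>T B'. invertible T \<and> T ** mat2 p q u v = B' ** T \<and>
     T ** mat2 l1 0 0 l2 = mat2 l1 0 0 l2 ** T \<and>
     (\<exists>s21 s22 t2. B' = mat2 s21 t2 t2 s22 \<or> B' = mat2 s21 (-t2) t2 s22)"
proof -
  define x where "x = sqrt (\<bar>u\<bar>/\<bar>q\<bar>)"
  have xpos: "x > 0" using assms by (simp add: x_def)
  have x2: "x^2 = \<bar>u\<bar>/\<bar>q\<bar>" using assms by (simp add: x_def)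
  let ?T = "mat2 x 0 0 1"
  let ?B = "mat2 p (x*q) (u/x) v"
  have i: "invertible ?T" using xpos inv2 by simp
  have e1: "?T ** mat2 p q u v = ?B ** ?T" using xpos by (simp add: mat2_eq_iff)
  have e2: "?T ** mat2 l1 0 0 l2 = mat2 l1 0 0 l2 ** ?T" by (simp add: mat2_eq_iff)
  have d: "x*q = u/x \<or> x*q = -(u/x)"
  proof -
    have "x*x*\<bar>q\<bar> = \<bar>u\<bar>" using x2 assms by (simp add: power2_eq_square)
    moreover have "\<bar>x*x*q\<bar> = x*x*\<bar>q\<bar>" using xpos by (simp add: abs_mult)
    ultimately have "\<bar>x*x*q\<bar> = \<bar>u\<bar>" by simp
    then have "x*x*q = u \<or> x*x*q = -u" by arith
    moreover have xq: "x*q = (x*x*q)/x" using xpos by simp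
    ultimately show ?thesis
    proof (elim disjE)
      assume h: "x*x*q = u" show ?thesis using xq[unfolded h] by (rule disjI1)
    next
      assume h: "x*x*q = -u" show ?thesis using xq[unfolded h] by (simp only: minus_divide_left disjI2 refl)
    qed
  qed
  have "\<exists>s21 s22 t2. ?B = mat2 s21 t2 t2 s22 \<or> ?B = mat2 s21 (-t2) t2 s22"
    using d by (metis minus_minus)
  with i e1 e2 show ?thesis by blast
qed


lemma rot_real:
  assumes "(a-d)^2 + 4*b*c < 0"
  shows "\<exists>T s t. invertible T \<and> T ** mat2 a b c d = mat2 s (-t) t s ** T"
proof -
  define t where "t = sqrt (-((a-d)^2 + 4*b*c))/2"
  have t2: "4*(t*t) = -((a-d)^2 + 4*b*c)" using assms
    by (simp add: t_def)
  have tpos: "t > 0" using assms by (simp add: t_def)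
  have "c \<noteq> 0" using assms by (cases "c = 0") auto
  let ?T = "mat2 c ((d-a)/2) 0 t"
  let ?s = "(a+d)/2"
  have "det ?T \<noteq> 0" using \<open>c \<noteq> 0\<close> tpos by simp
  then have i: "invertible ?T" by (rule inv2)
  have e: "?T ** mat2 a b c d = mat2 ?s (-t) t ?s ** ?T"
  proof -
    have "c*b + (d-a)/2*d = ?s*((d-a)/2) - t*t" using t2 by (simp add: field_simps power2_eq_square)
    then show ?thesis by (simp add: mat2_eq_iff field_simps)
  qed
  show ?thesis using i e by blast
qed


lemma fix_ii:
  shows "\<exists>T B'. invertible T \<and> T ** mat2 p q u v = B' ** T \<and>
     T ** mat2 s (-t) t s = mat2 s (-t) t s ** T \<and>
     (\<exists>s21 s22 t2. B' = mat2 s21 (-t2) t2 s22)"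
proof (cases "q + u = 0")
  case True
  let ?T = "mat2 1 0 0 1"
  have i: "invertible ?T" by (rule inv2) simp
  have e1: "?T ** mat2 p q u v = mat2 p (-u) u v ** ?T" using True by (simp add: mat2_eq_iff)
  have e2: "?T ** mat2 s (-t) t s = mat2 s (-t) t s ** ?T" by (simp add: mat2_eq_iff)
  show ?thesis
    apply (rule exI[of _ ?T], rule exI[of _ "mat2 p (-u) u v"])
    using i e1 e2 by blast
next
  case False
  define u0 where "u0 = (p - v)/2"
  define v0 where "v0 = (q + u)/2"
  define m where "m = (p + v)/2"
  define n where "n = (u - q)/2"
  define \<rho> where "\<rho> = sqrt (u0^2 + v0^2)"
  have r2: "\<rho>*\<rho> = u0*u0 + v0 * v0" by (simp add: \<rho>_def power2_eq_square)
  have v0: "v0 \<noteq> 0" using False by (simp add: v0_def)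
  let ?T = "mat2 (\<rho>+u0) v0 (-v0) (\<rho>+u0)"
  let ?B = "mat2 (m+\<rho>) (-n) n (m-\<rho>)"
  have "det ?T = (\<rho>+u0)^2 + v0^2" by (simp add: power2_eq_square)
  moreover have "(\<rho>+u0)^2 + v0^2 > 0" using v0 by (simp add: add_nonneg_pos)
  ultimately have "det ?T \<noteq> 0" by linarith
  then have i: "invertible ?T" by (rule inv2)
  have pe: "p = m + u0" "v = m - u0" "q = v0 - n" "u = v0 + n"
    by (simp_all add: u0_def v0_def m_def n_def field_simps)
  have e1: "?T ** mat2 p q u v = ?B ** ?T"
    unfolding pe using r2 by (simp add: mat2_eq_iff algebra_simps)
  have e2: "?T ** mat2 s (-t) t s = mat2 s (-t) t s ** ?T" by (simp add: mat2_eq_iff algebra_simps)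
  show ?thesis
    apply (rule exI[of _ ?T], rule exI[of _ ?B])
    using i e1 e2 by blast
qed


theorem lemma2p10:
  fixes A1 A2 :: "real^2^2"
  assumes "card (eigenvalues A1) = 2"
  shows "\<exists>T :: real^2^2. invertible T \<and>
    ((eigenvalues A1 \<subseteq> \<real> \<and> det (commutator A1 A2) \<noteq> 0) \<longrightarrow>
       (\<exists>l1 l2 s21 s22 t2. T ** A1 ** matrix_inv T = mat2 l1 0 0 l2 \<and>
          (T ** A2 ** matrix_inv T = mat2 s21 t2 t2 s22 \<or>
           T ** A2 ** matrix_inv T = mat2 s21 (- t2) t2 s22))) \<and>
    ((\<exists>\<mu>\<in>eigenvalues A1. \<mu> \<notin> \<real>) \<longrightarrow>
       (\<exists>s1 t1 s21 s22 t2. T ** A1 ** matrix_inv T = mat2 s1 (- t1) t1 s1 \<and>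
          T ** A2 ** matrix_inv T = mat2 s21 (- t2) t2 s22))"
proof -
  obtain a b c d where A1: "A1 = mat2 a b c d" using mat2_eta by blast
  have I: "invertible (mat2 1 0 0 1)" by (rule inv2) simp
  consider "(a-d)^2 + 4*b*c = 0" | "(a-d)^2 + 4*b*c > 0" | "(a-d)^2 + 4*b*c < 0" by linarith
  then show ?thesis
  proof cases
    case 1
    then have "card (eigenvalues A1) = 1" unfolding A1 by (simp add: eig_zero)
    with assms show ?thesis by simp
  next
    case 2
    have noii: "\<not> (\<exists>\<mu>\<in>eigenvalues A1. \<mu> \<notin> \<real>)" using eig_pos[OF 2] unfolding A1 by blast
    show ?thesis
    proof (cases "det (commutator A1 A2) \<noteq> 0")
      case False
      show ?thesis using I False noii by blast
    next
      case True
      obtain T1 l1 l2 where T1: "invertible T1" "T1 ** A1 = mat2 l1 0 0 l2 ** T1"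
        using diag_real[OF 2] unfolding A1 by blast
      define B where "B = T1 ** A2 ** matrix_inv T1"
      have TB: "T1 ** A2 = B ** T1" unfolding B_def by (rule sim_inv[OF T1(1)])
      obtain p q u v where Bm: "B = mat2 p q u v" using mat2_eta by blast
      have "det (commutator A1 A2) = det (commutator (mat2 l1 0 0 l2) B)"
        using sim_det[OF T1(1) sim_comm[OF T1(2) TB]] .
      also have "\<dots> = (l1-l2)^2 * (q*u)" unfolding Bm commutator_def
        by (simp add: power2_eq_square algebra_simps)
      finally have "q \<noteq> 0" "u \<noteq> 0" using True by auto
      then obtain T2 B' where T2: "invertible T2" "T2 ** mat2 p q u v = B' ** T2"
        "T2 ** mat2 l1 0 0 l2 = mat2 l1 0 0 l2 ** T2"
        and B': "\<exists>s21 s22 t2. B' = mat2 s21 t2 t2 s22 \<or> B' = mat2 s21 (-t2) t2 s22"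
        using fix_i by blast
      define T where "T = T2 ** T1"
      have iT: "invertible T" unfolding T_def using T2(1) T1(1) by (rule invertible_mult)
      have e1: "T ** A1 ** matrix_inv T = mat2 l1 0 0 l2"
        by (rule inv_conj[OF iT]) (unfold T_def, rule sim_trans[OF T1(2) T2(3)])
      have e2: "T ** A2 ** matrix_inv T = B'"
        by (rule inv_conj[OF iT]) (unfold T_def, rule sim_trans[OF TB T2(2)[folded Bm]])
      show ?thesis
        apply (rule exI[of _ T])
        using iT e1 e2 B' noii by blast
    qed
  next
    case 3
    have noi: "\<not> eigenvalues A1 \<subseteq> \<real>" using eig_neg[OF 3] unfolding A1 by blast
    obtain T1 s t where T1: "invertible T1" "T1 ** A1 = mat2 s (-t) t s ** T1"
      using rot_real[OF 3] unfolding A1 by blast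
    define B where "B = T1 ** A2 ** matrix_inv T1"
    have TB: "T1 ** A2 = B ** T1" unfolding B_def by (rule sim_inv[OF T1(1)])
    obtain p q u v where Bm: "B = mat2 p q u v" using mat2_eta by blast
    obtain T2 B' where T2: "invertible T2" "T2 ** mat2 p q u v = B' ** T2"
        "T2 ** mat2 s (-t) t s = mat2 s (-t) t s ** T2"
        and B': "\<exists>s21 s22 t2. B' = mat2 s21 (-t2) t2 s22"
      using fix_ii by blast
    define T where "T = T2 ** T1"
    have iT: "invertible T" unfolding T_def using T2(1) T1(1) by (rule invertible_mult)
    have e1: "T ** A1 ** matrix_inv T = mat2 s (-t) t s"
      by (rule inv_conj[OF iT]) (unfold T_def, rule sim_trans[OF T1(2) T2(3)])
    have e2: "T ** A2 ** matrix_inv T = B'"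
      by (rule inv_conj[OF iT]) (unfold T_def, rule sim_trans[OF TB T2(2)[folded Bm]])
    show ?thesis
      apply (rule exI[of _ T])
      using iT e1 e2 B' noi by blast
  qed
qed

end
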